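(* Fix a leader policy $\pi$, let $\nu^\pi$ be its quantal response under the true model, let $\tilde\nu=\{\tilde\nu_h(\cdot\mid s)\in\Delta(\mathcal B)\}$ be any follower policy, and let $\tilde U_h:\mathcal S\times\mathcal A\times\mathcal B\to\mathbb R$, $\tilde W_h:\mathcal S\to\mathbb R$ ($h\in[H]$) be arbitrary functions with $\|\tilde U_h\|_\infty\le H$, and set $\tilde U_{H+1}=0$, $\tilde W_{H+1}=0$. Then $$\mathbb E_{s_1\sim\rho_0}\bigl[(T_1^{\pi,\tilde\nu}\tilde U_1)(s_1)\bigr]-J(\pi)\le\sum_{h=1}^H\mathbb E\bigl[(\tilde U_h-u_h)(s_h,a_h,b_h)-(T_{h+1}^{\pi,\tilde\nu}\tilde U_{h+1})(s_{h+1})\bigr]+\sum_{h=1}^H H\,\mathbb E\bigl[\|\tilde\nu_h(\cdot\mid s_h)-\nu_h^\pi(\cdot\mid s_h)\|_1\bigr],$$ and $$\mathbb E_{s_1\sim\rho_0}\bigl[\tilde W_1(s_1)\bigr]-J(\pi)\le\sum_{h=1}^H\mathbb E\bigl[(\tilde U_h-u_h)(s_h,a_h,b_h)-\tilde W_{h+1}(s_{h+1})\bigr]+\sum_{h=1}^H\mathbb E\bigl[\tilde W_h(s_h)-(T_h^{\pi,\tilde\nu}\tilde U_h)(s_h)\bigr]+\sum_{h=1}^H H\,\mathbb E\bigl[\|\tilde\nu_h(\cdot\mid s_h)-\nu_h^\pi(\cdot\mid s_h)\|_1\bigr],$$ where $\mathbb E$ is over a trajectory generated by $(\pi,\nu^\pi)$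 on the true model.
   Context: Episodic leader–follower Markov game (true model): state space $\mathcal S$, action sets $\mathcal A$ (leader), $\mathcal B$ (follower), horizon $H$, initial distribution $\rho_0$, transitions $P_h(\cdot\mid s,a,b)$, leader rewards $u_h\in[0,1]$, follower rewards $r_h\in[0,1]$. Leader policy: $\pi_h(\cdot\mid s,b)\in\Delta(\mathcal A)$; follower policy $\nu_h(\cdot\mid s)\in\Delta(\mathcal B)$; at step $h$, $b_h\sim\nu_h(\cdot\mid s_h)$, $a_h\sim\pi_h(\cdot\mid s_h,b_h)$, $s_{h+1}\sim P_h(\cdot\mid s_h,a_h,b_h)$. With $\eta>0,\gamma\in[0,1]$, the quantal response $\nu^\pi$ is defined by backward recursion: $V_{H+1}^\pi=0$, $Q_h^\pi(s,b)=\sum_a\pi_h(a\mid s,b)\bigl(r_h(s,a,b)+\gamma\mathbb E_{s'\sim P_h(\cdot\mid s,a,b)}V_{h+1}^\pi(s')\bigr)$, $V_h^\pi(s)=\eta^{-1}\log\sum_b e^{\eta Q_h^\pi(s,b)}$, $\nu_h^\pi(b\mid s)=\exp(\eta(Q_h^\pi(s,b)-V_h^\pi(s)))$. Leader values: $W_{H+1}^\pi=0$, $U_h^\pi=u_h+P_hW_{h+1}^\pi$, $W_h^\pi=T_h^{\pi,\nu^\pi}U_h^\pi$, $J(\pi)=\mathbb E_{s_1\sim\rho_0}W_1^\pi(s_1)$, where for a follower policy $\nu$ the operator is $(T_h^{\pi,\nu}f)(s)=\sum_{a,b}f(s,a,b)\pi_h(a\mid s,b)\nu_h(b\mid s)$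 (and $T_{H+1}^{\pi,\nu}\tilde U_{H+1}=0$). *)

theory Defs
  imports Complex_Main
begin

text \<open>Conventions:
  rho0 s : initial distribution; P h s a b s' : transition probability;
  u h s a b / r h s a b : leader / follower rewards;
  lp h s b a = pi_h(a | s,b) : leader policy; nu h s b = nu_h(b | s) : follower policy.\<close>

definition is_dist :: "('x::finite \<Rightarrow> real) \<Rightarrow> bool" where
  "is_dist p \<longleftrightarrow> (\<forall>x. 0 \<le> p x) \<and> (\<Sum>x\<in>UNIV. p x) = 1"

definition Top :: "(nat \<Rightarrow> 's \<Rightarrow> 'b \<Rightarrow> 'a::finite \<Rightarrow> real) \<Rightarrow> (nat \<Rightarrow> 's \<Rightarrow> 'b::finite \<Rightarrow> real)
    \<Rightarrow> nat \<Rightarrow> ('s \<Rightarrow> 'a \<Rightarrow> 'b \<Rightarrow> real) \<Rightarrow> 's \<Rightarrow> real" where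
  "Top lp nu h f s = (\<Sum>a\<in>UNIV. \<Sum>b\<in>UNIV. f s a b * lp h s b a * nu h s b)"

definition Qstep :: "real \<Rightarrow> (nat \<Rightarrow> 's \<Rightarrow> 'a \<Rightarrow> 'b \<Rightarrow> real) \<Rightarrow> (nat \<Rightarrow> 's \<Rightarrow> 'a \<Rightarrow> 'b \<Rightarrow> 's::finite \<Rightarrow> real)
    \<Rightarrow> (nat \<Rightarrow> 's \<Rightarrow> 'b \<Rightarrow> 'a::finite \<Rightarrow> real) \<Rightarrow> ('s \<Rightarrow> real) \<Rightarrow> nat \<Rightarrow> 's \<Rightarrow> 'b \<Rightarrow> real" where
  "Qstep gamma r P lp Vnext h s b =
     (\<Sum>a\<in>UNIV. lp h s b a * (r h s a b + gamma * (\<Sum>s'\<in>UNIV. P h s a b s' * Vnext s')))"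

text \<open>qrVaux ... n is V_{H+1-n}^lp (backward recursion indexed by steps remaining).\<close>
fun qrVaux :: "real \<Rightarrow> real \<Rightarrow> nat \<Rightarrow> (nat \<Rightarrow> 's \<Rightarrow> 'a \<Rightarrow> 'b \<Rightarrow> real)
    \<Rightarrow> (nat \<Rightarrow> 's \<Rightarrow> 'a \<Rightarrow> 'b \<Rightarrow> 's::finite \<Rightarrow> real) \<Rightarrow> (nat \<Rightarrow> 's \<Rightarrow> 'b::finite \<Rightarrow> 'a::finite \<Rightarrow> real)
    \<Rightarrow> nat \<Rightarrow> 's \<Rightarrow> real" where
  "qrVaux eta gamma H r P lp 0 s = 0"
| "qrVaux eta gamma H r P lp (Suc n) s =
     ln (\<Sum>b\<in>UNIV. exp (eta * Qstep gamma r P lp (qrVaux eta gamma H r P lp n) (H - n) s b)) / eta"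

text \<open>V_h^lp (for 1 \<le> h \<le> H+1; V_{H+1} = 0).\<close>
definition qrV where
  "qrV eta gamma H r P lp h = qrVaux eta gamma H r P lp (Suc H - h)"

definition qrQ where
  "qrQ eta gamma H r P lp h s b = Qstep gamma r P lp (qrV eta gamma H r P lp (Suc h)) h s b"

definition qrNu where
  "qrNu eta gamma H r P lp h s b =
     exp (eta * (qrQ eta gamma H r P lp h s b - qrV eta gamma H r P lp h s))"

text \<open>Leader value W_{H+1-n}^lp, with U_h = u_h + P_h W_{h+1}, W_h = T_h^{lp,nu^lp} U_h.\<close>
fun leadWaux :: "real \<Rightarrow> real \<Rightarrow> nat \<Rightarrow> (nat \<Rightarrow> 's \<Rightarrow> 'a \<Rightarrow> 'b \<Rightarrow> real) \<Rightarrow> (nat \<Rightarrow> 's \<Rightarrow> 'a \<Rightarrow> 'b \<Rightarrow> real)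
    \<Rightarrow> (nat \<Rightarrow> 's \<Rightarrow> 'a \<Rightarrow> 'b \<Rightarrow> 's::finite \<Rightarrow> real) \<Rightarrow> (nat \<Rightarrow> 's \<Rightarrow> 'b::finite \<Rightarrow> 'a::finite \<Rightarrow> real)
    \<Rightarrow> nat \<Rightarrow> 's \<Rightarrow> real" where
  "leadWaux eta gamma H u r P lp 0 s = 0"
| "leadWaux eta gamma H u r P lp (Suc n) s =
     Top lp (qrNu eta gamma H r P lp) (H - n)
       (\<lambda>s a b. u (H - n) s a b + (\<Sum>s'\<in>UNIV. P (H - n) s a b s' * leadWaux eta gamma H u r P lp n s')) s"

definition leadW where
  "leadW eta gamma H u r P lp h = leadWaux eta gamma H u r P lp (Suc H - h)"

definition Jval where
  "Jval eta gamma H rho0 u r P lp = (\<Sum>s\<in>UNIV. rho0 s * leadW eta gamma H u r P lp 1 s)"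

text \<open>stmarg rho0 P lp nu k s = Pr[s_{k+1} = s] along a trajectory generated by (lp, nu).\<close>
fun stmarg :: "('s::finite \<Rightarrow> real) \<Rightarrow> (nat \<Rightarrow> 's \<Rightarrow> 'a \<Rightarrow> 'b \<Rightarrow> 's \<Rightarrow> real)
    \<Rightarrow> (nat \<Rightarrow> 's \<Rightarrow> 'b::finite \<Rightarrow> 'a::finite \<Rightarrow> real) \<Rightarrow> (nat \<Rightarrow> 's \<Rightarrow> 'b \<Rightarrow> real) \<Rightarrow> nat \<Rightarrow> 's \<Rightarrow> real" where
  "stmarg rho0 P lp nu 0 s = rho0 s"
| "stmarg rho0 P lp nu (Suc k) s' =
     (\<Sum>s\<in>UNIV. \<Sum>a\<in>UNIV. \<Sum>b\<in>UNIV.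
        stmarg rho0 P lp nu k s * nu (Suc k) s b * lp (Suc k) s b a * P (Suc k) s a b s')"

definition stdist where
  "stdist rho0 P lp nu h = stmarg rho0 P lp nu (h - 1)"

text \<open>E[ F(s_h, a_h, b_h, s_{h+1}) ] along a trajectory generated by (lp, nu).\<close>
definition Etraj :: "('s::finite \<Rightarrow> real) \<Rightarrow> (nat \<Rightarrow> 's \<Rightarrow> 'a \<Rightarrow> 'b \<Rightarrow> 's \<Rightarrow> real)
    \<Rightarrow> (nat \<Rightarrow> 's \<Rightarrow> 'b::finite \<Rightarrow> 'a::finite \<Rightarrow> real) \<Rightarrow> (nat \<Rightarrow> 's \<Rightarrow> 'b \<Rightarrow> real) \<Rightarrow> nat
    \<Rightarrow> ('s \<Rightarrow> 'a \<Rightarrow> 'b \<Rightarrow> 's \<Rightarrow> real) \<Rightarrow> real" where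
  "Etraj rho0 P lp nu h F =
     (\<Sum>s\<in>UNIV. \<Sum>a\<in>UNIV. \<Sum>b\<in>UNIV. \<Sum>s'\<in>UNIV.
        stdist rho0 P lp nu h s * nu h s b * lp h s b a * P h s a b s' * F s a b s')"

end

theory Submission
  imports Defs
begin


lemma Etraj_alt:
  "Etraj rho0 P lp nu h F = (\<Sum>s\<in>UNIV. stdist rho0 P lp nu h s *
     Top lp nu h (\<lambda>s a b. \<Sum>s'\<in>UNIV. P h s a b s' * F s a b s') s)"
  unfolding Etraj_def Top_def
  by (simp add: sum_distrib_left sum_distrib_right mult_ac)

lemma Etraj_add:
  "Etraj rho0 P lp nu h (\<lambda>s a b s'. F s a b s' + G s a b s') = Etraj rho0 P lp nu h F + Etraj rho0 P lp nu h G"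
  unfolding Etraj_def by (simp add: distrib_left sum.distrib)

lemma Etraj_diff:
  "Etraj rho0 P lp nu h (\<lambda>s a b s'. F s a b s' - G s a b s') = Etraj rho0 P lp nu h F - Etraj rho0 P lp nu h G"
  unfolding Etraj_def by (simp add: right_diff_distrib sum_subtractf)

lemma Etraj_cmult:
  "Etraj rho0 P lp nu h (\<lambda>s a b s'. c * F s a b s') = c * Etraj rho0 P lp nu h F"
  unfolding Etraj_def by (simp add: sum_distrib_left mult_ac)

lemma sum4_swap:
  "(\<Sum>x\<in>A. \<Sum>y\<in>B. \<Sum>z\<in>C. \<Sum>w\<in>D. f x y z w) = (\<Sum>w\<in>D. \<Sum>x\<in>A. \<Sum>y\<in>B. \<Sum>z\<in>C. f x y z w)"
proof -
  have "(\<Sum>x\<in>A. \<Sum>y\<in>B. \<Sum>z\<in>C. \<Sum>w\<in>D. f x y z w) = (\<Sum>x\<in>A. \<Sum>y\<in>B. \<Sum>w\<in>D. \<Sum>z\<in>C. f x y z w)"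
    by (rule sum.cong[OF refl], rule sum.cong[OF refl], rule sum.swap)
  also have "\<dots> = (\<Sum>x\<in>A. \<Sum>w\<in>D. \<Sum>y\<in>B. \<Sum>z\<in>C. f x y z w)"
    by (rule sum.cong[OF refl], rule sum.swap)
  also have "\<dots> = (\<Sum>w\<in>D. \<Sum>x\<in>A. \<Sum>y\<in>B. \<Sum>z\<in>C. f x y z w)"
    by (rule sum.swap)
  finally show ?thesis .
qed

lemma Etraj_next:
  "Etraj rho0 P lp nu (Suc k) (\<lambda>s a b s'. g s') = (\<Sum>s'\<in>UNIV. stdist rho0 P lp nu (Suc (Suc k)) s' * g s')"
  unfolding Etraj_def stdist_def
  apply (simp add: sum_distrib_right)
  apply (subst sum4_swap)
  apply (rule sum.cong[OF refl])
  apply (simp add: mult_ac)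
  done

lemma Top_const:
  assumes "\<And>s b. (\<Sum>a\<in>UNIV. lp h s b a) = 1" "\<And>s. (\<Sum>b\<in>UNIV. nu h s b) = 1"
  shows "Top lp nu h (\<lambda>s a b. c s) s = c s"
proof -
  have "Top lp nu h (\<lambda>s a b. c s) s = c s * (\<Sum>b\<in>UNIV. nu h s b * (\<Sum>a\<in>UNIV. lp h s b a))"
    unfolding Top_def by (subst sum.swap) (simp add: sum_distrib_left sum_distrib_right mult_ac)
  then show ?thesis using assms by simp
qed



lemma leadW_step:
  assumes "1 \<le> h" "h \<le> H"
  shows "leadW eta gamma H u r P lp h s = Top lp (qrNu eta gamma H r P lp) h
     (\<lambda>s a b. u h s a b + (\<Sum>s'\<in>UNIV. P h s a b s' * leadW eta gamma H u r P lp (Suc h) s')) s"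
proof -
  have e1: "Suc H - h = Suc (H - h)" and e2: "H - (H - h) = h" and e3: "Suc H - Suc h = H - h"
    using assms by auto
  show ?thesis unfolding leadW_def e1 e3 by (simp only: leadWaux.simps e2)
qed

lemma qrV_step:
  assumes "1 \<le> h" "h \<le> H"
  shows "qrV eta gamma H r P lp h s = ln (\<Sum>b\<in>UNIV. exp (eta * qrQ eta gamma H r P lp h s b)) / eta"
proof -
  have e1: "Suc H - h = Suc (H - h)" and e2: "H - (H - h) = h" and e3: "Suc H - Suc h = H - h"
    using assms by auto
  show ?thesis unfolding qrV_def qrQ_def e1 e3 by (simp only: qrVaux.simps e2)
qed

lemma qrNu_sum:
  assumes "1 \<le> h" "h \<le> H" "eta > 0"
  shows "(\<Sum>b\<in>UNIV. qrNu eta gamma H r P lp h s (b::'b::finite)) = 1"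
proof -
  let ?Q = "\<lambda>b. qrQ eta gamma H r P lp h s (b::'b)"
  define S where "S = (\<Sum>b\<in>UNIV. exp (eta * ?Q b))"
  have Spos: "S > 0" unfolding S_def by (rule sum_pos) auto
  have V: "eta * qrV eta gamma H r P lp h s = ln S"
    using qrV_step[OF assms(1,2), of eta gamma r P lp s] assms(3) unfolding S_def by simp
  have "(\<Sum>b\<in>UNIV. qrNu eta gamma H r P lp h s b) = (\<Sum>b\<in>UNIV. exp (eta * ?Q b) / exp (ln S))"
    unfolding qrNu_def by (rule sum.cong) (auto simp: right_diff_distrib V exp_diff)
  also have "\<dots> = S / S" using Spos by (simp only: sum_divide_distrib[symmetric] S_def exp_ln)
  finally show ?thesis using Spos by simp
qed

lemma Etraj_indep:
  assumes "\<And>s a b. (\<Sum>s'\<in>UNIV. P h s a b s') = 1"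
  shows "Etraj rho0 P lp nu h (\<lambda>s a b s'. f s a b) = (\<Sum>s\<in>UNIV. stdist rho0 P lp nu h s * Top lp nu h f s)"
proof -
  have "\<And>s a b. (\<Sum>s'\<in>UNIV. P h s a b s' * f s a b) = f s a b"
    using assms by (simp add: sum_distrib_right[symmetric])
  then show ?thesis by (simp add: Etraj_alt)
qed

lemma telesc: "(\<Sum>h=1..n. g h - g (Suc h)) = (g 1 - g (Suc n) :: real)"
  by (induction n) auto

lemma Top_diff_bound:
  assumes lp1: "\<And>b. (\<Sum>a\<in>UNIV. lp h s b a) = 1" and lp0: "\<And>b a. 0 \<le> lp h s b a"
    and bd: "\<And>a b. \<bar>f s a b\<bar> \<le> c"
  shows "Top lp nu1 h f s - Top lp nu2 h f s \<le> c * (\<Sum>b\<in>UNIV. \<bar>nu1 h s b - nu2 h s b\<bar>)"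
proof -
  have "Top lp nu1 h f s - Top lp nu2 h f s = (\<Sum>b\<in>UNIV. (nu1 h s b - nu2 h s b) * (\<Sum>a\<in>UNIV. f s a b * lp h s b a))"
    unfolding Top_def
    by (subst (1 2) sum.swap) (simp add: sum_subtractf[symmetric] sum_distrib_left right_diff_distrib mult_ac)
  also have "\<dots> \<le> (\<Sum>b\<in>UNIV. \<bar>nu1 h s b - nu2 h s b\<bar> * c)"
  proof (rule sum_mono)
    fix b
    have "\<bar>\<Sum>a\<in>UNIV. f s a b * lp h s b a\<bar> \<le> (\<Sum>a\<in>UNIV. \<bar>f s a b * lp h s b a\<bar>)" by (rule sum_abs)
    also have "\<dots> \<le> (\<Sum>a\<in>UNIV. c * lp h s b a)"
      by (rule sum_mono) (simp add: abs_mult lp0 mult_right_mono bd)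
    also have "\<dots> = c" using lp1 by (simp add: sum_distrib_left[symmetric])
    finally have X: "\<bar>\<Sum>a\<in>UNIV. f s a b * lp h s b a\<bar> \<le> c" .
    have "(nu1 h s b - nu2 h s b) * (\<Sum>a\<in>UNIV. f s a b * lp h s b a) \<le> \<bar>(nu1 h s b - nu2 h s b) * (\<Sum>a\<in>UNIV. f s a b * lp h s b a)\<bar>" by simp
    also have "\<dots> \<le> \<bar>nu1 h s b - nu2 h s b\<bar> * c" unfolding abs_mult by (rule mult_left_mono[OF X]) simp
    finally show "(nu1 h s b - nu2 h s b) * (\<Sum>a\<in>UNIV. f s a b * lp h s b a) \<le> \<bar>nu1 h s b - nu2 h s b\<bar> * c" .
  qed
  also have "\<dots> = c * (\<Sum>b\<in>UNIV. \<bar>nu1 h s b - nu2 h s b\<bar>)" by (simp add: sum_distrib_left mult_ac)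
  finally show ?thesis .
qed

theorem mainTheorem3:
  fixes H :: nat and eta gamma :: real
    and rho0 :: "'s::finite \<Rightarrow> real"
    and P :: "nat \<Rightarrow> 's \<Rightarrow> 'a::finite \<Rightarrow> 'b::finite \<Rightarrow> 's \<Rightarrow> real"
    and u r :: "nat \<Rightarrow> 's \<Rightarrow> 'a \<Rightarrow> 'b \<Rightarrow> real"
    and lp :: "nat \<Rightarrow> 's \<Rightarrow> 'b \<Rightarrow> 'a \<Rightarrow> real"
    and nut :: "nat \<Rightarrow> 's \<Rightarrow> 'b \<Rightarrow> real"
    and Ut :: "nat \<Rightarrow> 's \<Rightarrow> 'a \<Rightarrow> 'b \<Rightarrow> real"
    and Wt :: "nat \<Rightarrow> 's \<Rightarrow> real"
  assumes eta: "eta > 0" and gamma: "0 \<le> gamma" "gamma \<le> 1"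
    and rho0: "is_dist rho0"
    and P: "\<And>h s a b. h \<in> {1..H} \<Longrightarrow> is_dist (P h s a b)"
    and u: "\<And>h s a b. h \<in> {1..H} \<Longrightarrow> 0 \<le> u h s a b \<and> u h s a b \<le> 1"
    and r: "\<And>h s a b. h \<in> {1..H} \<Longrightarrow> 0 \<le> r h s a b \<and> r h s a b \<le> 1"
    and lp: "\<And>h s b. h \<in> {1..H} \<Longrightarrow> is_dist (lp h s b)"
    and nut: "\<And>h s. h \<in> {1..H} \<Longrightarrow> is_dist (nut h s)"
    and Ut_bd: "\<And>h s a b. h \<in> {1..H} \<Longrightarrow> \<bar>Ut h s a b\<bar> \<le> real H"
    and Ut_end: "Ut (Suc H) = (\<lambda>s a b. 0)"
    and Wt_end: "Wt (Suc H) = (\<lambda>s. 0)"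
  defines "nuq \<equiv> qrNu eta gamma H r P lp"
  shows
   "((\<Sum>s\<in>UNIV. rho0 s * Top lp nut 1 (Ut 1) s) - Jval eta gamma H rho0 u r P lp
      \<le> (\<Sum>h=1..H. Etraj rho0 P lp nuq h
            (\<lambda>s a b s'. (Ut h s a b - u h s a b) - Top lp nut (Suc h) (Ut (Suc h)) s'))
        + (\<Sum>h=1..H. real H * Etraj rho0 P lp nuq h
            (\<lambda>s a b s'. \<Sum>b'\<in>UNIV. \<bar>nut h s b' - nuq h s b'\<bar>))) \<and>
    ((\<Sum>s\<in>UNIV. rho0 s * Wt 1 s) - Jval eta gamma H rho0 u r P lp
      \<le> (\<Sum>h=1..H. Etraj rho0 P lp nuq h
            (\<lambda>s a b s'. (Ut h s a b - u h s a b) - Wt (Suc h) s'))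
        + (\<Sum>h=1..H. Etraj rho0 P lp nuq h
            (\<lambda>s a b s'. Wt h s - Top lp nut h (Ut h) s))
        + (\<Sum>h=1..H. real H * Etraj rho0 P lp nuq h
            (\<lambda>s a b s'. \<Sum>b'\<in>UNIV. \<bar>nut h s b' - nuq h s b'\<bar>)))"
proof -
  have lp0: "\<And>h s b a. h \<in> {1..H} \<Longrightarrow> 0 \<le> lp h s b a" using lp unfolding is_dist_def by blast
  have lp1: "\<And>h s b. h \<in> {1..H} \<Longrightarrow> (\<Sum>a\<in>UNIV. lp h s b a) = 1" using lp unfolding is_dist_def by blast
  have P0: "\<And>h s a b s'. h \<in> {1..H} \<Longrightarrow> 0 \<le> P h s a b s'" using P unfolding is_dist_def by blast
  have P1: "\<And>h s a b. h \<in> {1..H} \<Longrightarrow> (\<Sum>s'\<in>UNIV. P h s a b s') = 1" using P unfolding is_dist_def by blast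
  have rho00: "\<And>s. 0 \<le> rho0 s" using rho0 unfolding is_dist_def by blast
  have nuq0: "\<And>h s b. 0 \<le> nuq h s b" unfolding nuq_def qrNu_def by simp
  have nuq1: "\<And>h s. h \<in> {1..H} \<Longrightarrow> (\<Sum>b\<in>UNIV. nuq h s b) = 1"
    unfolding nuq_def using qrNu_sum eta by auto
  define d where "d h s = stdist rho0 P lp nuq h s" for h s
  have stm0: "\<forall>s. 0 \<le> stmarg rho0 P lp nuq k s" if "k < H" for k
    using that
  proof (induction k)
    case 0 then show ?case using rho00 by simp
  next
    case (Suc k)
    have hk: "Suc k \<in> {1..H}" using Suc.prems by auto
    show ?case using Suc lp0[OF hk] P0[OF hk] nuq0
      by (auto intro!: sum_nonneg mult_nonneg_nonneg)
  qed
  have d0: "\<And>h s. h \<in> {1..H} \<Longrightarrow> 0 \<le> d h s"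
    unfolding d_def stdist_def using stm0 by auto
  define A where "A h = (\<Sum>s\<in>UNIV. d h s * Top lp nut h (Ut h) s)" for h
  define B where "B h = (\<Sum>s\<in>UNIV. d h s * leadW eta gamma H u r P lp h s)" for h
  define C where "C h = (\<Sum>s\<in>UNIV. d h s * Wt h s)" for h
  define E1 where "E1 h = Etraj rho0 P lp nuq h (\<lambda>s a b s'. Ut h s a b)" for h
  define Eu where "Eu h = Etraj rho0 P lp nuq h (\<lambda>s a b s'. u h s a b)" for h
  define D where "D h = Etraj rho0 P lp nuq h (\<lambda>s a b s'. \<Sum>b'\<in>UNIV. \<bar>nut h s b' - nuq h s b'\<bar>)" for h
  have Enext: "Etraj rho0 P lp nuq h (\<lambda>s a b s'. g s') = (\<Sum>s'\<in>UNIV. d (Suc h) s' * g s')"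
    if "h \<in> {1..H}" for h g
  proof -
    have "h = Suc (h - 1)" using that by auto
    then obtain k where "h = Suc k" by blast
    then show ?thesis unfolding d_def by (simp add: Etraj_next)
  qed
  have F1: "B h = Eu h + B (Suc h)" if h: "h \<in> {1..H}" for h
  proof -
    have "Eu h + B (Suc h) = Etraj rho0 P lp nuq h
        (\<lambda>s a b s'. u h s a b + leadW eta gamma H u r P lp (Suc h) s')"
      unfolding Eu_def B_def Etraj_add Enext[OF h] ..
    also have "\<dots> = (\<Sum>s\<in>UNIV. d h s * Top lp nuq h (\<lambda>s a b. \<Sum>s'\<in>UNIV. P h s a b s' *
        (u h s a b + leadW eta gamma H u r P lp (Suc h) s')) s)"
      unfolding Etraj_alt d_def ..
    also have "\<dots> = B h"
    proof -
      have "\<And>s a b. (\<Sum>s'\<in>UNIV. P h s a b s' * (u h s a b + leadW eta gamma H u r P lp (Suc h) s'))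
         = u h s a b + (\<Sum>s'\<in>UNIV. P h s a b s' * leadW eta gamma H u r P lp (Suc h) s')"
        using P1[OF h] by (simp add: distrib_left sum.distrib sum_distrib_right[symmetric])
      then show ?thesis unfolding B_def using h
        by (simp add: leadW_step nuq_def)
    qed
    finally show ?thesis by simp
  qed
  have F2: "A h \<le> E1 h + real H * D h" if h: "h \<in> {1..H}" for h
  proof -
    have E1': "E1 h = (\<Sum>s\<in>UNIV. d h s * Top lp nuq h (Ut h) s)"
      unfolding E1_def d_def using Etraj_indep[where P=P and h=h, OF P1[OF h], of rho0 lp nuq "Ut h"] by simp
    have D': "D h = (\<Sum>s\<in>UNIV. d h s * (\<Sum>b'\<in>UNIV. \<bar>nut h s b' - nuq h s b'\<bar>))"
      unfolding D_def d_def
      using Etraj_indep[where P=P and h=h, OF P1[OF h], of rho0 lp nuq "\<lambda>s a b. \<Sum>b'\<in>UNIV. \<bar>nut h s b' - nuq h s b'\<bar>"]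
        Top_const[of lp h nuq "\<lambda>s. \<Sum>b'\<in>UNIV. \<bar>nut h s b' - nuq h s b'\<bar>"] lp1[OF h] nuq1[OF h]
      by simp
    have "A h \<le> (\<Sum>s\<in>UNIV. d h s * Top lp nuq h (Ut h) s + real H * (d h s * (\<Sum>b'\<in>UNIV. \<bar>nut h s b' - nuq h s b'\<bar>)))"
      unfolding A_def
    proof (rule sum_mono)
      fix s
      have "Top lp nut h (Ut h) s - Top lp nuq h (Ut h) s \<le> real H * (\<Sum>b'\<in>UNIV. \<bar>nut h s b' - nuq h s b'\<bar>)"
        by (rule Top_diff_bound) (use lp0[OF h] lp1[OF h] Ut_bd[OF h] in auto)
      then have "d h s * (Top lp nut h (Ut h) s - Top lp nuq h (Ut h) s) \<le> d h s * (real H * (\<Sum>b'\<in>UNIV. \<bar>nut h s b' - nuq h s b'\<bar>))"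
        by (rule mult_left_mono) (rule d0[OF h])
      then show "d h s * Top lp nut h (Ut h) s \<le> d h s * Top lp nuq h (Ut h) s + real H * (d h s * (\<Sum>b'\<in>UNIV. \<bar>nut h s b' - nuq h s b'\<bar>))"
        by (simp add: algebra_simps)
    qed
    also have "\<dots> = E1 h + real H * D h" unfolding E1' D' by (simp add: sum.distrib sum_distrib_left)
    finally show ?thesis .
  qed
  have F3: "Etraj rho0 P lp nuq h (\<lambda>s a b s'. (Ut h s a b - u h s a b) - Top lp nut (Suc h) (Ut (Suc h)) s')
      = E1 h - Eu h - A (Suc h)" if h: "h \<in> {1..H}" for h
    unfolding Etraj_diff E1_def Eu_def A_def Enext[OF h] ..
  have F4: "Etraj rho0 P lp nuq h (\<lambda>s a b s'. (Ut h s a b - u h s a b) - Wt (Suc h) s')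
      = E1 h - Eu h - C (Suc h)" if h: "h \<in> {1..H}" for h
    unfolding Etraj_diff E1_def Eu_def C_def Enext[OF h] ..
  have F5: "Etraj rho0 P lp nuq h (\<lambda>s a b s'. Wt h s - Top lp nut h (Ut h) s) = C h - A h" if h: "h \<in> {1..H}" for h
  proof -
    have "Etraj rho0 P lp nuq h (\<lambda>s a b s'. Wt h s - Top lp nut h (Ut h) s)
        = (\<Sum>s\<in>UNIV. d h s * Top lp nuq h (\<lambda>s a b. Wt h s - Top lp nut h (Ut h) s) s)"
      unfolding d_def by (rule Etraj_indep[where P=P and h=h, OF P1[OF h]])
    also have "\<dots> = (\<Sum>s\<in>UNIV. d h s * (Wt h s - Top lp nut h (Ut h) s))"
      using Top_const[of lp h nuq "\<lambda>s. Wt h s - Top lp nut h (Ut h) s"] lp1[OF h] nuq1[OF h] by simp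
    also have "\<dots> = C h - A h" unfolding C_def A_def by (simp add: right_diff_distrib sum_subtractf)
    finally show ?thesis .
  qed
  have A_end: "A (Suc H) = 0" unfolding A_def Top_def Ut_end by simp
  have B_end: "B (Suc H) = 0" unfolding B_def leadW_def by simp
  have C_end: "C (Suc H) = 0" unfolding C_def Wt_end by simp
  have d1: "d 1 = rho0" unfolding d_def stdist_def by (rule ext) simp
  have A1: "A 1 = (\<Sum>s\<in>UNIV. rho0 s * Top lp nut 1 (Ut 1) s)" unfolding A_def d1 ..
  have B1: "B 1 = Jval eta gamma H rho0 u r P lp" unfolding B_def d1 Jval_def ..
  have C1: "C 1 = (\<Sum>s\<in>UNIV. rho0 s * Wt 1 s)" unfolding C_def d1 ..
  have G1: "(\<Sum>h=1..H. (A h - B h) - (A (Suc h) - B (Suc h))) \<le>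
      (\<Sum>h=1..H. Etraj rho0 P lp nuq h (\<lambda>s a b s'. (Ut h s a b - u h s a b) - Top lp nut (Suc h) (Ut (Suc h)) s')
        + real H * D h)"
  proof (rule sum_mono)
    fix h assume h: "h \<in> {1..H}"
    show "(A h - B h) - (A (Suc h) - B (Suc h)) \<le> Etraj rho0 P lp nuq h (\<lambda>s a b s'. (Ut h s a b - u h s a b) - Top lp nut (Suc h) (Ut (Suc h)) s')
        + real H * D h"
      unfolding F3[OF h] using F1[OF h] F2[OF h] by linarith
  qed
  have G2: "(\<Sum>h=1..H. (C h - B h) - (C (Suc h) - B (Suc h))) \<le>
      (\<Sum>h=1..H. Etraj rho0 P lp nuq h (\<lambda>s a b s'. (Ut h s a b - u h s a b) - Wt (Suc h) s')
        + Etraj rho0 P lp nuq h (\<lambda>s a b s'. Wt h s - Top lp nut h (Ut h) s)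
        + real H * D h)"
  proof (rule sum_mono)
    fix h assume h: "h \<in> {1..H}"
    show "(C h - B h) - (C (Suc h) - B (Suc h)) \<le> Etraj rho0 P lp nuq h (\<lambda>s a b s'. (Ut h s a b - u h s a b) - Wt (Suc h) s')
        + Etraj rho0 P lp nuq h (\<lambda>s a b s'. Wt h s - Top lp nut h (Ut h) s)
        + real H * D h"
      unfolding F4[OF h] F5[OF h] using F1[OF h] F2[OF h] by linarith
  qed
  show ?thesis
  proof
    show "(\<Sum>s\<in>UNIV. rho0 s * Top lp nut 1 (Ut 1) s) - Jval eta gamma H rho0 u r P lp
      \<le> (\<Sum>h=1..H. Etraj rho0 P lp nuq h
            (\<lambda>s a b s'. (Ut h s a b - u h s a b) - Top lp nut (Suc h) (Ut (Suc h)) s'))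
        + (\<Sum>h=1..H. real H * Etraj rho0 P lp nuq h
            (\<lambda>s a b s'. \<Sum>b'\<in>UNIV. \<bar>nut h s b' - nuq h s b'\<bar>))"
      using G1 unfolding telesc[of "\<lambda>h. A h - B h"] sum.distrib D_def A_end B_end A1 B1 by simp
    show "(\<Sum>s\<in>UNIV. rho0 s * Wt 1 s) - Jval eta gamma H rho0 u r P lp
      \<le> (\<Sum>h=1..H. Etraj rho0 P lp nuq h
            (\<lambda>s a b s'. (Ut h s a b - u h s a b) - Wt (Suc h) s'))
        + (\<Sum>h=1..H. Etraj rho0 P lp nuq h
            (\<lambda>s a b s'. Wt h s - Top lp nut h (Ut h) s))
        + (\<Sum>h=1..H. real H * Etraj rho0 P lp nuq h
            (\<lambda>s a b s'. \<Sum>b'\<in>UNIV. \<bar>nut h s b' - nuq h s b'\<bar>))"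
      using G2 unfolding telesc[of "\<lambda>h. C h - B h"] sum.distrib D_def C_end B_end C1 B1 by simp
  qed
qed

end
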